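(* Let $\epsilon\in(0,1]$, $\delta\in(0,1)$, $0<\gamma\le\epsilon/14$, and $b=4/\gamma$. Then for every belief matrix $P\in[0,1]^{n\times m}$ and ground truth $\vec\theta\in[0,1]^m$ with $m\ge\frac{28\ln(2n/\delta)}{\epsilon\gamma}$, and every report matrix $R$ in which each $r_i$ is undominated for belief $p_i$, ReportNoisyMax with scale $b$ selects an $\epsilon$-optimal forecaster with probability at least $1-\delta$ (over $\vec y\sim\vec\theta$ and the noise). In particular its event complexity is $O(\ln(n/\delta)/\epsilon^2)$.
   Context: Setting: $n$ forecasters, $m$ independent binary events with $\Pr[y_t=1]=\theta_t$; forecaster $i$ has beliefs $p_i\in[0,1]^m$ and reports $r_i\in[0,1]^m$. Quadratic score $S(q,y)=1-(y-q)^2$. Accuracy $a_i=1-\frac1m\sum_t(p_{it}-\theta_t)^2$; $i$ is $\epsilon$-optimal if $a_i\ge\max_ja_j-\epsilon$. ReportNoisyMax with scale $b$: compute $q_j=\sum_tS(r_{jt},y_t)$, add independent Laplace noise with density $\frac1{2b}e^{-|w|/b}$ to each, and select the forecaster with the largest noisy total. $M(R;p_i)=\mathbb{E}_{\vec y\sim p_i}M(R,\vec y)$ with $y_t\sim\mathrm{Bernoulli}(p_{it})$ independently; for fixed $p_i$, $\hat r_i$ strictly dominates $r_i$ if $M(\hat r_i,R_{-i};p_i)_i>M(r_i,R_{-i};p_i)_i$ for all $R_{-i}$, and $r_i$ is undominated if nothing strictly dominates it. *)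

theory Defs
  imports "HOL-Probability.Probability"
begin

text \<open>Forecasters are indexed by i < n, events by t < m.
  Beliefs/reports: nat \<Rightarrow> nat \<Rightarrow> real (forecaster, event); outcomes y : nat \<Rightarrow> bool.\<close>

definition quad_score :: "real \<Rightarrow> bool \<Rightarrow> real" where
  "quad_score q y = 1 - (of_bool y - q)^2"

definition total_score :: "nat \<Rightarrow> (nat \<Rightarrow> real) \<Rightarrow> (nat \<Rightarrow> bool) \<Rightarrow> real" where
  "total_score m r y = (\<Sum>t<m. quad_score (r t) (y t))"

definition laplace_density :: "real \<Rightarrow> real \<Rightarrow> real" where
  "laplace_density b w = exp (- \<bar>w\<bar> / b) / (2 * b)"

definition laplace_measure :: "real \<Rightarrow> real measure" where
  "laplace_measure b = density lborel (\<lambda>w. ennreal (laplace_density b w))"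

definition noise_measure :: "nat \<Rightarrow> real \<Rightarrow> (nat \<Rightarrow> real) measure" where
  "noise_measure n b = PiM {..<n} (\<lambda>_. laplace_measure b)"

text \<open>M(R, y)_i: probability (over the independent noise) that ReportNoisyMax selects i,
  i.e. that i has the strictly largest noisy total (ties have probability zero).\<close>
definition rnm_select :: "nat \<Rightarrow> nat \<Rightarrow> real \<Rightarrow> (nat \<Rightarrow> nat \<Rightarrow> real) \<Rightarrow> (nat \<Rightarrow> bool) \<Rightarrow> nat \<Rightarrow> real" where
  "rnm_select n m b R y i = measure (noise_measure n b)
     {w \<in> space (noise_measure n b). \<forall>j<n. j \<noteq> i \<longrightarrow>
         total_score m (R j) y + w j < total_score m (R i) y + w i}"

definition outcomes :: "nat \<Rightarrow> (nat \<Rightarrow> bool) set" where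
  "outcomes m = PiE {..<m} (\<lambda>_. UNIV)"

definition outcome_prob :: "nat \<Rightarrow> (nat \<Rightarrow> real) \<Rightarrow> (nat \<Rightarrow> bool) \<Rightarrow> real" where
  "outcome_prob m \<theta> y = (\<Prod>t<m. if y t then \<theta> t else 1 - \<theta> t)"

definition rnm_expected :: "nat \<Rightarrow> nat \<Rightarrow> real \<Rightarrow> (nat \<Rightarrow> nat \<Rightarrow> real) \<Rightarrow> (nat \<Rightarrow> real) \<Rightarrow> nat \<Rightarrow> real" where
  "rnm_expected n m b R p i = (\<Sum>y\<in>outcomes m. outcome_prob m p y * rnm_select n m b R y i)"

definition unit_vec :: "nat \<Rightarrow> (nat \<Rightarrow> real) \<Rightarrow> bool" where
  "unit_vec m v \<longleftrightarrow> (\<forall>t<m. 0 \<le> v t \<and> v t \<le> 1)"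

definition report_matrix :: "nat \<Rightarrow> nat \<Rightarrow> (nat \<Rightarrow> nat \<Rightarrow> real) \<Rightarrow> bool" where
  "report_matrix n m R \<longleftrightarrow> (\<forall>j<n. unit_vec m (R j))"

definition strictly_dominates :: "nat \<Rightarrow> nat \<Rightarrow> real \<Rightarrow> nat \<Rightarrow> (nat \<Rightarrow> real) \<Rightarrow> (nat \<Rightarrow> real) \<Rightarrow> (nat \<Rightarrow> real) \<Rightarrow> bool" where
  "strictly_dominates n m b i p rhat r \<longleftrightarrow>
     (\<forall>R. report_matrix n m R \<longrightarrow>
        rnm_expected n m b (R(i := rhat)) p i > rnm_expected n m b (R(i := r)) p i)"

definition undominated :: "nat \<Rightarrow> nat \<Rightarrow> real \<Rightarrow> nat \<Rightarrow> (nat \<Rightarrow> real) \<Rightarrow> (nat \<Rightarrow> real) \<Rightarrow> bool" where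
  "undominated n m b i p r \<longleftrightarrow>
     \<not> (\<exists>rhat. unit_vec m rhat \<and> strictly_dominates n m b i p rhat r)"

definition accuracy :: "nat \<Rightarrow> (nat \<Rightarrow> real) \<Rightarrow> (nat \<Rightarrow> real) \<Rightarrow> real" where
  "accuracy m p \<theta> = 1 - (1 / real m) * (\<Sum>t<m. (p t - \<theta> t)^2)"

definition eps_optimal :: "nat \<Rightarrow> nat \<Rightarrow> real \<Rightarrow> (nat \<Rightarrow> nat \<Rightarrow> real) \<Rightarrow> (nat \<Rightarrow> real) \<Rightarrow> nat \<Rightarrow> bool" where
  "eps_optimal n m \<epsilon> P \<theta> i \<longleftrightarrow>
     (\<forall>j<n. accuracy m (P i) \<theta> \<ge> accuracy m (P j) \<theta> - \<epsilon>)"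

definition success_prob :: "nat \<Rightarrow> nat \<Rightarrow> real \<Rightarrow> real \<Rightarrow> (nat \<Rightarrow> nat \<Rightarrow> real) \<Rightarrow> (nat \<Rightarrow> nat \<Rightarrow> real) \<Rightarrow> (nat \<Rightarrow> real) \<Rightarrow> real" where
  "success_prob n m b \<epsilon> P R \<theta> =
     (\<Sum>y\<in>outcomes m. outcome_prob m \<theta> y *
        (\<Sum>i\<in>{i. i < n \<and> eps_optimal n m \<epsilon> P \<theta> i}. rnm_select n m b R y i))"

end

theory Submission
  imports Defs
begin

lemma lap_pos: "0 < b \<Longrightarrow> 0 < laplace_density b x"
  by (simp add: laplace_density_def)

lemma lap_ratio:
  assumes "0 < b" shows "laplace_density b y * exp (- \<bar>x - y\<bar> / b) \<le> laplace_density b x"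
proof -
  have "\<bar>x\<bar> \<le> \<bar>y\<bar> + \<bar>x - y\<bar>" by linarith
  hence "\<bar>x\<bar> / b \<le> (\<bar>y\<bar> + \<bar>x - y\<bar>) / b" using assms by (intro divide_right_mono) auto
  hence "- \<bar>y\<bar> / b - \<bar>x - y\<bar> / b \<le> - \<bar>x\<bar> / b"
    by (simp add: add_divide_distrib)
  hence "exp (- \<bar>y\<bar> / b) * exp (- \<bar>x - y\<bar> / b) \<le> exp (- \<bar>x\<bar> / b)"
    by (simp add: exp_add[symmetric])
  thus ?thesis using assms unfolding laplace_density_def
    by (simp add: divide_right_mono field_simps)
qed

lemma lap_measurable[measurable]: "laplace_density b \<in> borel_measurable borel"
  unfolding laplace_density_def by measurable

lemma lap_tail_nn:
  assumes b: "0 < b" and a: "0 \<le> a"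
  shows "(\<integral>\<^sup>+x. ennreal (laplace_density b x) * indicator {a..} x \<partial>lborel) = ennreal (exp (- a / b) / 2)"
proof -
  have "(\<integral>\<^sup>+x. ennreal (laplace_density b x) * indicator {a..} x \<partial>lborel)
      = (\<integral>\<^sup>+x. ennreal (exp (- x / b) / (2 * b)) * indicator {a..} x \<partial>lborel)"
    using a by (intro nn_integral_cong) (auto simp: laplace_density_def split: split_indicator)
  also have "\<dots> = ennreal (0 - (- exp (- a / b) / 2))"
  proof (rule nn_integral_FTC_atLeast)
    show "(\<lambda>x. exp (- x / b) / (2 * b)) \<in> borel_measurable borel" by measurable
    fix x assume "a \<le> x"
    show "((\<lambda>x. - exp (- x / b) / 2) has_real_derivative exp (- x / b) / (2 * b)) (at x)"
      using b by (auto intro!: derivative_eq_intros simp: field_simps)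
    show "0 \<le> exp (- x / b) / (2 * b)" using b by simp
  next
    have "((\<lambda>x. - exp (- x / b) / 2) \<longlongrightarrow> - 0 / 2) at_top"
      using b by (intro tendsto_intros filterlim_compose[OF exp_at_bot]
          filterlim_tendsto_neg_mult_at_bot[OF tendsto_const] filterlim_ident)
        (auto simp: divide_inverse mult.commute[of _ "inverse b"] filterlim_uminus_at_bot intro!: filterlim_tendsto_pos_mult_at_top filterlim_ident)
    thus "((\<lambda>x. - exp (- x / b) / 2) \<longlongrightarrow> 0) at_top" by simp
  qed
  also have "\<dots> = ennreal (exp (- a / b) / 2)"
    by simp
  finally show ?thesis .
qed

lemma lap_tail_nn':
  assumes b: "0 < b" and a: "0 \<le> a"
  shows "(\<integral>\<^sup>+x. ennreal (laplace_density b x) * indicator {..-a} x \<partial>lborel) = ennreal (exp (- a / b) / 2)"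
proof -
  have "(\<integral>\<^sup>+x. ennreal (laplace_density b x) * indicator {..-a} x \<partial>lborel)
     = (\<integral>\<^sup>+x. ennreal (laplace_density b (0 + -1 * x)) * indicator {..-a} (0 + -1 * x) \<partial>lborel)"
    using nn_integral_real_affine[of "\<lambda>x. ennreal (laplace_density b x) * indicator {..-a} x" "-1" 0] by simp
  also have "\<dots> = (\<integral>\<^sup>+x. ennreal (laplace_density b x) * indicator {a..} x \<partial>lborel)"
    by (intro nn_integral_cong) (auto simp: laplace_density_def split: split_indicator)
  finally show ?thesis using lap_tail_nn[OF assms] by simp
qed

lemma lap_emeasure: "emeasure (laplace_measure b) A = (\<integral>\<^sup>+x. ennreal (laplace_density b x) * indicator A x \<partial>lborel)"
  if "A \<in> sets borel"
  using that unfolding laplace_measure_def by (simp add: emeasure_density)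

lemma lap_sets[simp]: "sets (laplace_measure b) = sets borel"
  by (simp add: laplace_measure_def)

lemma lap_space[simp]: "space (laplace_measure b) = UNIV"
  by (simp add: laplace_measure_def)

lemma lap_prob: assumes b: "0 < b" shows "prob_space (laplace_measure b)"
proof
  have "emeasure (laplace_measure b) (space (laplace_measure b))
      = (\<integral>\<^sup>+x. ennreal (laplace_density b x) * indicator {0..} x + ennreal (laplace_density b x) * indicator {..-0} x \<partial>lborel)"
    by (subst lap_emeasure) (auto intro!: nn_integral_cong_AE eventually_mono[OF AE_lborel_singleton[of 0]] split: split_indicator)
  also have "\<dots> = ennreal (exp (- 0 / b) / 2) + ennreal (exp (- 0 / b) / 2)"
    using b lap_tail_nn'[OF b, of 0] by (subst nn_integral_add) (auto simp: lap_tail_nn)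
  also have "\<dots> = 1" by (subst ennreal_plus[symmetric]) auto
  finally show "emeasure (laplace_measure b) (space (laplace_measure b)) = 1" .
qed

lemma lap_interval_upper:
  assumes b: "0 < b" and h: "0 \<le> h" and K0: "0 \<le> K" and K: "\<And>x. x \<in> {c<..c+h} \<Longrightarrow> laplace_density b x \<le> K"
  shows "measure (laplace_measure b) {c<..c+h} \<le> K * h"
proof -
  interpret prob_space "laplace_measure b" by (rule lap_prob[OF b])
  have "emeasure (laplace_measure b) {c<..c+h} \<le> (\<integral>\<^sup>+x. ennreal K * indicator {c<..c+h} x \<partial>lborel)"
    by (subst lap_emeasure) (auto intro!: nn_integral_mono K ennreal_leI split: split_indicator)
  also have "\<dots> = ennreal (K * h)" using h K0 by (simp add: nn_integral_cmult_indicator ennreal_mult)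
  finally show ?thesis using K0 h by (simp add: emeasure_eq_measure)
qed

lemma lap_interval_lower:
  assumes b: "0 < b" and h: "0 \<le> h" and K0: "0 \<le> K" and K: "\<And>x. x \<in> {c<..c+h} \<Longrightarrow> K \<le> laplace_density b x"
  shows "K * h \<le> measure (laplace_measure b) {c<..c+h}"
proof -
  interpret prob_space "laplace_measure b" by (rule lap_prob[OF b])
  have "ennreal (K * h) = (\<integral>\<^sup>+x. ennreal K * indicator {c<..c+h} x \<partial>lborel)"
    using h K0 by (simp add: nn_integral_cmult_indicator ennreal_mult)
  also have "\<dots> \<le> emeasure (laplace_measure b) {c<..c+h}"
    by (subst lap_emeasure) (auto intro!: nn_integral_mono K ennreal_leI split: split_indicator)
  finally show ?thesis using K0 h by (simp add: emeasure_eq_measure)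
qed

lemma lap_singleton: assumes b: "0 < b" shows "measure (laplace_measure b) {c} = 0"
proof -
  have "emeasure (laplace_measure b) {c} = 0"
    by (subst lap_emeasure) (auto intro!: nn_integral_zero' eventually_mono[OF AE_lborel_singleton[of c]] split: split_indicator)
  thus ?thesis by (simp add: measure_def)
qed

lemma lap_upper_tail: assumes b: "0 < b" and a: "0 \<le> a"
  shows "measure (laplace_measure b) {a..} = exp (- a / b) / 2"
  using lap_tail_nn[OF assms] by (simp add: lap_emeasure measure_def)

lemma lap_lower_tail: assumes b: "0 < b" and a: "0 \<le> a"
  shows "measure (laplace_measure b) {..-a} = exp (- a / b) / 2"
  using lap_tail_nn'[OF assms] by (simp add: lap_emeasure measure_def)

lemma noise_prob: "0 < b \<Longrightarrow> prob_space (noise_measure n b)"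
  unfolding noise_measure_def by (intro prob_space_PiM lap_prob)

lemma noise_decomp:
  assumes b: "0 < b" and i: "i < n"
    and A: "{w \<in> space (noise_measure n b). P w} \<in> sets (noise_measure n b)"
  defines "I \<equiv> {..<n} - {i}"
  shows "(\<lambda>X. measure (laplace_measure b) {x. P (X(i := x))}) \<in> borel_measurable (PiM I (\<lambda>_. laplace_measure b))"
    and "measure (noise_measure n b) {w \<in> space (noise_measure n b). P w}
       = (\<integral>X. measure (laplace_measure b) {x. P (X(i := x))} \<partial>(PiM I (\<lambda>_. laplace_measure b)))"
proof -
  let ?L = "laplace_measure b"
  let ?PI = "PiM I (\<lambda>_. ?L)"
  let ?N = "noise_measure n b"
  let ?f = "\<lambda>(x, X). X(i := x)"
  let ?A = "{w \<in> space ?N. P w}"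
  interpret L: prob_space ?L by (rule lap_prob[OF b])
  interpret PI: prob_space ?PI by (intro prob_space_PiM lap_prob[OF b])
  interpret LP: pair_sigma_finite ?L ?PI ..
  have ins: "insert i I = {..<n}" using i by (auto simp: I_def)
  have N: "?N = distr (?L \<Otimes>\<^sub>M ?PI) (PiM (insert i I) (\<lambda>_. ?L)) ?f"
    unfolding noise_measure_def ins[symmetric]
    by (rule distr_pair_PiM_eq_PiM[symmetric]) (auto intro: lap_prob[OF b])
  have fm: "?f \<in> measurable (?L \<Otimes>\<^sub>M ?PI) (PiM (insert i I) (\<lambda>_. ?L))"
    by measurable
  have Q: "?f -` ?A \<inter> space (?L \<Otimes>\<^sub>M ?PI) \<in> sets (?L \<Otimes>\<^sub>M ?PI)"
    using A fm unfolding N by (auto simp: measurable_def)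
  have sec: "(\<lambda>x. (x, X)) -` (?f -` ?A \<inter> space (?L \<Otimes>\<^sub>M ?PI)) = {x. P (X(i := x))}"
    if "X \<in> space ?PI" for X
    using that ins unfolding noise_measure_def
    by (auto simp: space_pair_measure space_PiM PiE_def extensional_def Pi_def)
  have em: "(\<lambda>X. emeasure ?L ((\<lambda>x. (x, X)) -` (?f -` ?A \<inter> space (?L \<Otimes>\<^sub>M ?PI)))) \<in> borel_measurable ?PI"
    by (rule LP.measurable_emeasure_Pair2[OF Q])
  have g: "(\<lambda>X. measure ?L {x. P (X(i := x))}) \<in> borel_measurable ?PI"
  proof (rule measurable_cong[THEN iffD1])
    show "(\<lambda>X. enn2real (emeasure ?L ((\<lambda>x. (x, X)) -` (?f -` ?A \<inter> space (?L \<Otimes>\<^sub>M ?PI))))) \<in> borel_measurable ?PI"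
      using em by measurable
    fix X assume "X \<in> space ?PI"
    thus "enn2real (emeasure ?L ((\<lambda>x. (x, X)) -` (?f -` ?A \<inter> space (?L \<Otimes>\<^sub>M ?PI)))) = measure ?L {x. P (X(i := x))}"
      using sec by (simp add: measure_def)
  qed
  thus "(\<lambda>X. measure (laplace_measure b) {x. P (X(i := x))}) \<in> borel_measurable (PiM I (\<lambda>_. laplace_measure b))" .
  have int: "integrable ?PI (\<lambda>X. measure ?L {x. P (X(i := x))})"
    by (rule PI.integrable_const_bound[where B=1]) (auto intro: g)
  have "emeasure ?N ?A = emeasure (?L \<Otimes>\<^sub>M ?PI) (?f -` ?A \<inter> space (?L \<Otimes>\<^sub>M ?PI))"
    using A unfolding N by (subst emeasure_distr[OF fm]) (auto simp: N)
  also have "\<dots> = (\<integral>\<^sup>+X. emeasure ?L ((\<lambda>x. (x, X)) -` (?f -` ?A \<inter> space (?L \<Otimes>\<^sub>M ?PI))) \<partial>?PI)"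
    by (rule LP.emeasure_pair_measure_alt2[OF Q])
  also have "\<dots> = (\<integral>\<^sup>+X. ennreal (measure ?L {x. P (X(i := x))}) \<partial>?PI)"
    by (intro nn_integral_cong) (simp only: sec L.emeasure_eq_measure)
  also have "\<dots> = ennreal (\<integral>X. measure ?L {x. P (X(i := x))} \<partial>?PI)"
    by (rule nn_integral_eq_integral[OF int]) auto
  finally show "measure ?N ?A = (\<integral>X. measure ?L {x. P (X(i := x))} \<partial>?PI)"
    by (simp add: measure_def integral_nonneg_AE)
qed

abbreviation "PIm n i b \<equiv> PiM ({..<n} - {i}) (\<lambda>_. laplace_measure b)"

lemma comp_meas: "j \<in> I \<Longrightarrow> (\<lambda>x. x j) \<in> borel_measurable (PiM I (\<lambda>_. laplace_measure b))"
  using measurable_component_singleton[of j I "\<lambda>_. laplace_measure b"]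
  by (simp add: measurable_def)

lemma noise_set_upper: "{w \<in> space (noise_measure n b). a \<le> w j} \<in> sets (noise_measure n b)" if "j < n"
  using that comp_meas[of j "{..<n}" b] unfolding noise_measure_def
  by (intro borel_measurable_le) auto

lemma noise_set_lower: "{w \<in> space (noise_measure n b). w j \<le> a} \<in> sets (noise_measure n b)" if "j < n"
  using that comp_meas[of j "{..<n}" b] unfolding noise_measure_def
  by (intro borel_measurable_le) auto

lemma noise_set_tie: "{w \<in> space (noise_measure n b). w k + c = w l} \<in> sets (noise_measure n b)" if "k < n" "l < n"
  using that comp_meas[of k "{..<n}" b] comp_meas[of l "{..<n}" b] unfolding noise_measure_def
  by (intro borel_measurable_eq borel_measurable_add) auto

lemma noise_set_sel: "{w \<in> space (noise_measure n b). \<forall>j<n. j \<noteq> i \<longrightarrow> c j + w j < d + w i} \<in> sets (noise_measure n b)"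
  if "i < n"
proof -
  have "{w \<in> space (noise_measure n b). \<forall>j<n. j \<noteq> i \<longrightarrow> c j + w j < d + w i}
    = space (noise_measure n b) \<inter> (\<Inter>j\<in>{..<n}-{i}. {w \<in> space (noise_measure n b). c j + w j < d + w i})"
    by auto
  also have "\<dots> \<in> sets (noise_measure n b)"
  proof (cases "{..<n} - {i} = {}")
    case True thus ?thesis by (simp only: True) simp
  next
    case False
    show ?thesis
    proof (intro sets.Int sets.top sets.finite_INT)
      fix j assume "j \<in> {..<n} - {i}"
      thus "{w \<in> space (noise_measure n b). c j + w j < d + w i} \<in> sets (noise_measure n b)"
        using that comp_meas[of j "{..<n}" b] comp_meas[of i "{..<n}" b] unfolding noise_measure_def
        by (intro borel_measurable_less borel_measurable_add) auto
    qed (use False in auto)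
  qed
  finally show ?thesis .
qed

lemma noise_upper_tail:
  assumes b: "0 < b" and j: "j < n" and a: "0 \<le> a"
  shows "measure (noise_measure n b) {w \<in> space (noise_measure n b). a \<le> w j} = exp (- a / b) / 2"
proof -
  interpret PI: prob_space "PIm n j b" by (intro prob_space_PiM lap_prob[OF b])
  have "measure (noise_measure n b) {w \<in> space (noise_measure n b). a \<le> w j}
     = (\<integral>X. measure (laplace_measure b) {x. a \<le> (X(j := x)) j} \<partial>PIm n j b)"
    by (rule noise_decomp(2)[OF b j noise_set_upper[OF j]])
  also have "\<dots> = (\<integral>X. exp (- a / b) / 2 \<partial>PIm n j b)"
    using lap_upper_tail[OF b a] by (simp add: atLeast_def)
  finally show ?thesis by (simp add: PI.prob_space)
qed

lemma noise_lower_tail: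
  assumes b: "0 < b" and j: "j < n" and a: "0 \<le> a"
  shows "measure (noise_measure n b) {w \<in> space (noise_measure n b). w j \<le> - a} = exp (- a / b) / 2"
proof -
  interpret PI: prob_space "PIm n j b" by (intro prob_space_PiM lap_prob[OF b])
  have "measure (noise_measure n b) {w \<in> space (noise_measure n b). w j \<le> - a}
     = (\<integral>X. measure (laplace_measure b) {x. (X(j := x)) j \<le> - a} \<partial>PIm n j b)"
    by (rule noise_decomp(2)[OF b j noise_set_lower[OF j]])
  also have "\<dots> = (\<integral>X. exp (- a / b) / 2 \<partial>PIm n j b)"
    using lap_lower_tail[OF b a] by (simp add: atMost_def)
  finally show ?thesis by (simp add: PI.prob_space)
qed

lemma noise_tie:
  assumes b: "0 < b" and k: "k < n" and l: "l < n" and kl: "k \<noteq> l"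
  shows "measure (noise_measure n b) {w \<in> space (noise_measure n b). w k + c = w l} = 0"
proof -
  interpret PI: prob_space "PIm n k b" by (intro prob_space_PiM lap_prob[OF b])
  have "measure (noise_measure n b) {w \<in> space (noise_measure n b). w k + c = w l}
     = (\<integral>X. measure (laplace_measure b) {x. (X(k := x)) k + c = (X(k := x)) l} \<partial>PIm n k b)"
    by (rule noise_decomp(2)[OF b k noise_set_tie[OF k l]])
  also have "\<dots> = (\<integral>X. 0 \<partial>PIm n k b)"
  proof (intro Bochner_Integration.integral_cong refl)
    fix X
    have "{x. (X(k := x)) k + c = (X(k := x)) l} = {X l - c}" using kl by auto
    thus "measure (laplace_measure b) {x. (X(k := x)) k + c = (X(k := x)) l} = 0"
      using lap_singleton[OF b] by simp
  qed
  finally show ?thesis by simp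
qed

definition psi :: "real \<Rightarrow> real \<Rightarrow> real" where
  "psi b c = measure (laplace_measure b) {c<..}"

definition Mx :: "nat \<Rightarrow> nat \<Rightarrow> (nat \<Rightarrow> nat \<Rightarrow> real) \<Rightarrow> (nat \<Rightarrow> bool) \<Rightarrow> nat \<Rightarrow> (nat \<Rightarrow> real) \<Rightarrow> real" where
  "Mx n m R y i X = Max ((\<lambda>j. total_score m (R j) y + X j) ` ({..<n} - {i}))"

lemma sel_formula:
  assumes b: "0 < b" and i: "i < n" and n: "2 \<le> n"
  shows "(\<lambda>X. psi b (Mx n m R y i X - total_score m (R i) y)) \<in> borel_measurable (PIm n i b)"
    and "rnm_select n m b R y i = (\<integral>X. psi b (Mx n m R y i X - total_score m (R i) y) \<partial>PIm n i b)"
proof -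
  let ?I = "{..<n} - {i}"
  have ne: "?I \<noteq> {}"
  proof
    assume "?I = {}"
    hence "0 \<notin> {..<n} - {i}" "1 \<notin> {..<n} - {i}" by auto
    thus False using n by auto
  qed
  have fin: "finite ?I" by auto
  have sec: "{x. \<forall>j<n. j \<noteq> i \<longrightarrow> total_score m (R j) y + (X(i := x)) j < total_score m (R i) y + (X(i := x)) i}
     = {Mx n m R y i X - total_score m (R i) y<..}" for X
  proof -
    have "(\<forall>j<n. j \<noteq> i \<longrightarrow> total_score m (R j) y + (X(i := x)) j < total_score m (R i) y + (X(i := x)) i)
      \<longleftrightarrow> Mx n m R y i X < total_score m (R i) y + x" for x
      unfolding Mx_def using ne fin by (subst Max_less_iff) auto
    thus ?thesis by auto
  qed
  note D = noise_decomp[OF b i noise_set_sel[OF i, where c="\<lambda>j. total_score m (R j) y" and d="total_score m (R i) y"]]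
  show "(\<lambda>X. psi b (Mx n m R y i X - total_score m (R i) y)) \<in> borel_measurable (PIm n i b)"
    using D(1) unfolding sec psi_def .
  show "rnm_select n m b R y i = (\<integral>X. psi b (Mx n m R y i X - total_score m (R i) y) \<partial>PIm n i b)"
    using D(2) unfolding sec psi_def rnm_select_def .
qed

lemma psi_diff:
  assumes b: "0 < b" and d: "0 \<le> d"
  shows "psi b c - psi b (c + d) = measure (laplace_measure b) {c<..c+d}"
proof -
  interpret prob_space "laplace_measure b" by (rule lap_prob[OF b])
  have "{c<..} = {c<..c+d} \<union> {c+d<..}" using d by auto
  hence "psi b c = measure (laplace_measure b) ({c<..c+d} \<union> {c+d<..})" by (simp add: psi_def)
  also have "\<dots> = measure (laplace_measure b) {c<..c+d} + psi b (c + d)"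
    unfolding psi_def by (rule finite_measure_Union) auto
  finally show ?thesis by simp
qed

lemma psi_bounds: "0 < b \<Longrightarrow> 0 \<le> psi b c \<and> psi b c \<le> 1"
  using prob_space.prob_le_1[OF lap_prob] by (simp add: psi_def)

lemma pointwise_key:
  assumes b: "0 < b" and Dg: "0 < Dg" and d: "0 \<le> d" and cc: "\<bar>cg - cn\<bar> \<le> 2"
    and pg: "0 \<le> pg" and pn: "0 \<le> pn"
    and cond: "pn * d * exp (d / b) < pg * Dg * exp (- (2 + Dg) / b)"
  shows "0 < pg * (psi b (cg - Dg) - psi b cg) - pn * (psi b cn - psi b (cn + d))"
proof -
  let ?f = "laplace_density b"
  have f0: "0 < ?f cn" by (rule lap_pos[OF b])
  have low: "?f cn * exp (- (2 + Dg) / b) * Dg \<le> psi b (cg - Dg) - psi b cg"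
  proof -
    have "?f cn * exp (- (2 + Dg) / b) * Dg \<le> measure (laplace_measure b) {cg - Dg<..cg - Dg + Dg}"
    proof (rule lap_interval_lower[OF b])
      fix x assume x: "x \<in> {cg - Dg<..cg - Dg + Dg}"
      have "\<bar>x - cn\<bar> \<le> 2 + Dg" using x cc by auto
      hence "\<bar>x - cn\<bar> / b \<le> (2 + Dg) / b" using b by (simp add: divide_right_mono)
      hence "- ((2 + Dg) / b) \<le> - (\<bar>x - cn\<bar> / b)" by linarith
      hence "exp (- (2 + Dg) / b) \<le> exp (- \<bar>x - cn\<bar> / b)" by (simp only: minus_divide_left exp_le_cancel_iff)
      hence "?f cn * exp (- (2 + Dg) / b) \<le> ?f cn * exp (- \<bar>x - cn\<bar> / b)"
        using f0 by (simp add: mult_left_mono)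
      also have "\<dots> \<le> ?f x" by (rule lap_ratio[OF b])
      finally show "?f cn * exp (- (2 + Dg) / b) \<le> ?f x" .
    qed (use Dg f0 in auto)
    also have "\<dots> = psi b (cg - Dg) - psi b cg"
      using psi_diff[OF b, of Dg "cg - Dg"] Dg by simp
    finally show ?thesis .
  qed
  have up: "psi b cn - psi b (cn + d) \<le> ?f cn * exp (d / b) * d"
  proof -
    have "measure (laplace_measure b) {cn<..cn+d} \<le> ?f cn * exp (d / b) * d"
    proof (rule lap_interval_upper[OF b d])
      fix x assume x: "x \<in> {cn<..cn+d}"
      have xd: "\<bar>cn - x\<bar> \<le> d" using x by auto
      have "?f x * exp (- \<bar>cn - x\<bar> / b) \<le> ?f cn" by (rule lap_ratio[OF b])
      hence "?f x \<le> ?f cn * exp (\<bar>cn - x\<bar> / b)"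
        by (simp add: exp_minus field_simps)
      also have "\<dots> \<le> ?f cn * exp (d / b)"
        using xd b f0 by (intro mult_left_mono) (auto simp: divide_right_mono)
      finally show "?f x \<le> ?f cn * exp (d / b)" .
    qed (use f0 in auto)
    thus ?thesis using psi_diff[OF b d, of cn] by simp
  qed
  have "pn * (psi b cn - psi b (cn + d)) \<le> pn * (?f cn * exp (d / b) * d)"
    using up pn by (rule mult_left_mono)
  also have "\<dots> = ?f cn * (pn * d * exp (d / b))" by simp
  also have "\<dots> < ?f cn * (pg * Dg * exp (- (2 + Dg) / b))"
    using cond f0 by simp
  also have "\<dots> = pg * (?f cn * exp (- (2 + Dg) / b) * Dg)" by simp
  also have "\<dots> \<le> pg * (psi b (cg - Dg) - psi b cg)"
    using low pg by (rule mult_left_mono)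
  finally show ?thesis by simp
qed

lemma max_shift:
  fixes f g :: "nat \<Rightarrow> real"
  assumes "finite S" "S \<noteq> {}" "\<And>j. j \<in> S \<Longrightarrow> \<bar>f j - g j\<bar> \<le> 1"
  shows "\<bar>Max (f ` S) - Max (g ` S)\<bar> \<le> 1"
proof -
  have A: "Max (f ` S) \<le> Max (g ` S) + 1" if fin: "finite S" and ne: "S \<noteq> {}" and h: "\<And>j. j \<in> S \<Longrightarrow> \<bar>f j - g j\<bar> \<le> 1"
    for f g :: "nat \<Rightarrow> real"
  proof -
    have "Max (f ` S) \<in> f ` S" by (rule Max_in) (use fin ne in auto)
    then obtain j where j: "j \<in> S" "Max (f ` S) = f j" by auto
    have "g j \<le> Max (g ` S)" by (rule Max_ge) (use fin j in auto)
    thus ?thesis using j h[OF j(1)] by linarith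
  qed
  have "Max (g ` S) \<le> Max (f ` S) + 1" using assms by (intro A) (auto simp: abs_minus_commute)
  moreover have "Max (f ` S) \<le> Max (g ` S) + 1" using assms by (intro A) auto
  ultimately show ?thesis by linarith
qed

lemma ts_upd_y:
  assumes t: "t < m"
  shows "total_score m r (z(t := u)) = (\<Sum>s\<in>{..<m}-{t}. quad_score (r s) (z s)) + quad_score (r t) u"
proof -
  have "total_score m r (z(t := u)) = (\<Sum>s\<in>insert t ({..<m}-{t}). quad_score (r s) ((z(t := u)) s))"
    unfolding total_score_def using t by (intro sum.cong) auto
  also have "\<dots> = quad_score (r t) u + (\<Sum>s\<in>{..<m}-{t}. quad_score (r s) ((z(t := u)) s))"
    by (subst sum.insert) auto
  also have "(\<Sum>s\<in>{..<m}-{t}. quad_score (r s) ((z(t := u)) s)) = (\<Sum>s\<in>{..<m}-{t}. quad_score (r s) (z s))"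
    by (intro sum.cong) auto
  finally show ?thesis by (simp only: add.commute)
qed

lemma ts_upd_r:
  assumes t: "t < m"
  shows "total_score m (r(t := v)) y = total_score m r y + (quad_score v (y t) - quad_score (r t) (y t))"
proof -
  have "total_score m (r(t := v)) y = (\<Sum>s\<in>insert t ({..<m}-{t}). quad_score ((r(t := v)) s) (y s))"
    unfolding total_score_def using t by (intro sum.cong) auto
  also have "\<dots> = quad_score v (y t) + (\<Sum>s\<in>{..<m}-{t}. quad_score (r s) (y s))"
    by (subst sum.insert) (auto intro!: sum.cong)
  also have "total_score m r y = (\<Sum>s\<in>insert t ({..<m}-{t}). quad_score (r s) (y s))"
    unfolding total_score_def using t by (intro sum.cong) auto
  hence "total_score m r y = quad_score (r t) (y t) + (\<Sum>s\<in>{..<m}-{t}. quad_score (r s) (y s))"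
    by (subst (asm) sum.insert) auto
  ultimately show ?thesis by simp
qed

lemma quad_diff: "quad_score r True - quad_score r False = 2 * r - 1"
  by (simp add: quad_score_def power2_eq_square algebra_simps)

lemma outcomes_split:
  fixes F :: "(nat \<Rightarrow> bool) \<Rightarrow> real"
  assumes t: "t < m"
  shows "(\<Sum>y\<in>outcomes m. F y) = (\<Sum>z\<in>PiE ({..<m}-{t}) (\<lambda>_. UNIV). F (z(t := True)) + F (z(t := False)))"
proof -
  have "(\<Sum>y\<in>outcomes m. F y) = (\<Sum>(u, z)\<in>UNIV \<times> PiE ({..<m}-{t}) (\<lambda>_. UNIV). F (z(t := u)))"
    unfolding outcomes_def
  proof (rule sum.reindex_bij_witness[of _ "\<lambda>(u, z). z(t := u)" "\<lambda>y. (y t, y(t := undefined))"])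
    fix y :: "nat \<Rightarrow> bool" assume y: "y \<in> PiE {..<m} (\<lambda>_. UNIV)"
    show "(case (y t, y(t := undefined)) of (u, z) \<Rightarrow> z(t := u)) = y" by simp
    show "(y t, y(t := undefined)) \<in> UNIV \<times> PiE ({..<m}-{t}) (\<lambda>_. UNIV)"
      using y by (simp add: PiE_def extensional_def)
    show "(case (y t, y(t := undefined)) of (u, z) \<Rightarrow> F (z(t := u))) = F y" by simp
  next
    fix uz :: "bool \<times> (nat \<Rightarrow> bool)" assume uz: "uz \<in> UNIV \<times> PiE ({..<m}-{t}) (\<lambda>_. UNIV)"
    obtain u z where [simp]: "uz = (u, z)" by (cases uz)
    have zt: "z t = undefined" using uz by (simp add: PiE_def extensional_def)
    show "(case uz of (u, z) \<Rightarrow> z(t := u)) \<in> PiE {..<m} (\<lambda>_. UNIV)"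
      using uz t by (simp add: PiE_def extensional_def)
    have "z(t := undefined) = z" using zt by (simp add: fun_upd_idem)
    thus "((case uz of (u, z) \<Rightarrow> z(t := u)) t, (case uz of (u, z) \<Rightarrow> z(t := u))(t := undefined)) = uz"
      by simp
  qed
  also have "\<dots> = (\<Sum>u\<in>UNIV. \<Sum>z\<in>PiE ({..<m}-{t}) (\<lambda>_. UNIV). F (z(t := u)))"
    by (subst sum.cartesian_product) auto
  also have "\<dots> = (\<Sum>z\<in>PiE ({..<m}-{t}) (\<lambda>_. UNIV). F (z(t := True)) + F (z(t := False)))"
    by (simp add: UNIV_bool sum.distrib)
  finally show ?thesis .
qed

definition wz :: "nat \<Rightarrow> nat \<Rightarrow> (nat \<Rightarrow> real) \<Rightarrow> (nat \<Rightarrow> bool) \<Rightarrow> real" where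
  "wz m t p z = (\<Prod>s\<in>{..<m}-{t}. if z s then p s else 1 - p s)"

lemma op_upd:
  assumes t: "t < m"
  shows "outcome_prob m p (z(t := u)) = (if u then p t else 1 - p t) * wz m t p z"
proof -
  have "outcome_prob m p (z(t := u)) = (\<Prod>s\<in>insert t ({..<m}-{t}). if (z(t := u)) s then p s else 1 - p s)"
    unfolding outcome_prob_def using t by (intro prod.cong) auto
  also have "\<dots> = (if u then p t else 1 - p t) * wz m t p z"
    unfolding wz_def by (subst prod.insert) (auto intro!: prod.cong)
  finally show ?thesis .
qed

lemma wz_nonneg: "unit_vec m p \<Longrightarrow> 0 \<le> wz m t p z"
  unfolding wz_def unit_vec_def by (intro prod_nonneg) auto

lemma wz_sum: "(\<Sum>z\<in>PiE ({..<m}-{t}) (\<lambda>_. UNIV). wz m t p z) = 1"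
proof -
  have "(\<Sum>z\<in>PiE ({..<m}-{t}) (\<lambda>_. UNIV). wz m t p z)
      = (\<Prod>s\<in>{..<m}-{t}. \<Sum>u\<in>UNIV. if u then p s else 1 - p s)"
    unfolding wz_def by (subst prod_sum_PiE) auto
  also have "\<dots> = 1" by (simp add: UNIV_bool)
  finally show ?thesis .
qed

lemma Mx_upd: "Mx n m (R(i := r)) y i X = Mx n m R y i X"
  unfolding Mx_def by (intro arg_cong[where f=Max] image_cong) auto

lemma c_shift:
  assumes t: "t < m" and RM: "report_matrix n m R" and rt: "0 \<le> r t" "r t \<le> 1"
    and n: "2 \<le> n" and i: "i < n"
  shows "\<bar>(Mx n m R (z(t := True)) i X - total_score m r (z(t := True)))
        - (Mx n m R (z(t := False)) i X - total_score m r (z(t := False)))\<bar> \<le> 2"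
proof -
  let ?I = "{..<n} - {i}"
  have ne: "?I \<noteq> {}"
  proof
    assume "?I = {}"
    hence "0 \<notin> {..<n} - {i}" "1 \<notin> {..<n} - {i}" by auto
    thus False using n by auto
  qed
  have M: "\<bar>Mx n m R (z(t := True)) i X - Mx n m R (z(t := False)) i X\<bar> \<le> 1"
    unfolding Mx_def
  proof (rule max_shift)
    fix j assume j: "j \<in> ?I"
    have "0 \<le> R j t" "R j t \<le> 1" using RM j t by (auto simp: report_matrix_def unit_vec_def)
    thus "\<bar>(total_score m (R j) (z(t := True)) + X j) - (total_score m (R j) (z(t := False)) + X j)\<bar> \<le> 1"
      using quad_diff[of "R j t"] by (simp add: ts_upd_y[OF t])
  qed (use ne in auto)
  have Q: "\<bar>total_score m r (z(t := True)) - total_score m r (z(t := False))\<bar> \<le> 1"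
    using quad_diff[of "r t"] rt by (simp add: ts_upd_y[OF t])
  show ?thesis using M Q by linarith
qed

lemma dom_step:
  fixes R :: "nat \<Rightarrow> nat \<Rightarrow> real" and r p :: "nat \<Rightarrow> real" and g :: bool and v :: real
  assumes b: "0 < b" and n: "2 \<le> n" and i: "i < n" and t: "t < m"
    and RM: "report_matrix n m R" and p: "unit_vec m p" and rt: "0 \<le> r t" "r t \<le> 1"
  defines "D \<equiv> \<lambda>u. quad_score v u - quad_score (r t) u"
  defines "pw \<equiv> \<lambda>u. if u then p t else 1 - p t"
  assumes Dg: "0 < D g" and Dn: "D (\<not> g) \<le> 0"
    and cond: "pw (\<not> g) * (- D (\<not> g)) * exp (- D (\<not> g) / b) < pw g * D g * exp (- (2 + D g) / b)"
  shows "rnm_expected n m b (R(i := r)) p i < rnm_expected n m b (R(i := r(t := v))) p i"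
proof -
  let ?PI = "PIm n i b"
  interpret PI: prob_space ?PI by (intro prob_space_PiM lap_prob[OF b])
  define c where "c = (\<lambda>y X. Mx n m R y i X - total_score m r y)"
  have pw_nn: "0 \<le> pw u" for u using p t by (auto simp: pw_def unit_vec_def)
  have sel0: "rnm_select n m b (R(i := r)) y i = (\<integral>X. psi b (c y X) \<partial>?PI)"
    and m0: "(\<lambda>X. psi b (c y X)) \<in> borel_measurable ?PI" for y
    using sel_formula[OF b i n, of m "R(i := r)" y] by (simp_all add: Mx_upd c_def)
  have q1: "total_score m (r(t := v)) y = total_score m r y + D (y t)" for y
    by (simp add: ts_upd_r[OF t] D_def)
  have sel1: "rnm_select n m b (R(i := r(t := v))) y i = (\<integral>X. psi b (c y X - D (y t)) \<partial>?PI)"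
    and m1: "(\<lambda>X. psi b (c y X - D (y t))) \<in> borel_measurable ?PI" for y
    using sel_formula[OF b i n, of m "R(i := r(t := v))" y] by (simp_all add: Mx_upd c_def q1 diff_diff_eq)
  have int0: "integrable ?PI (\<lambda>X. psi b (c y X))" for y
    by (rule PI.integrable_const_bound[where B=1]) (use psi_bounds[OF b] m0 in auto)
  have int1: "integrable ?PI (\<lambda>X. psi b (c y X - D (y t)))" for y
    by (rule PI.integrable_const_bound[where B=1]) (use psi_bounds[OF b] m1 in auto)
  define G where "G = (\<lambda>z X. (\<Sum>u\<in>UNIV. pw u * (psi b (c (z(t := u)) X - D u) - psi b (c (z(t := u)) X))))"
  have Gint: "(\<integral>X. G z X \<partial>?PI) = (\<Sum>u\<in>UNIV. pw u * (rnm_select n m b (R(i := r(t := v))) (z(t := u)) i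
       - rnm_select n m b (R(i := r)) (z(t := u)) i))" for z
  proof -
    have int1': "integrable ?PI (\<lambda>X. psi b (c (z(t := u)) X - D u))" for u
      using int1[of "z(t := u)"] by simp
    have "(\<integral>X. G z X \<partial>?PI) = (\<Sum>u\<in>UNIV. (\<integral>X. pw u * (psi b (c (z(t := u)) X - D u) - psi b (c (z(t := u)) X)) \<partial>?PI))"
      unfolding G_def
      by (rule Bochner_Integration.integral_sum) (intro integrable_mult_right Bochner_Integration.integrable_diff int1' int0)
    also have "\<dots> = (\<Sum>u\<in>UNIV. pw u * ((\<integral>X. psi b (c (z(t := u)) X - D u) \<partial>?PI) - (\<integral>X. psi b (c (z(t := u)) X) \<partial>?PI)))"
      by (intro sum.cong refl) (simp add: Bochner_Integration.integral_diff[OF int1' int0])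
    finally show ?thesis unfolding sel0 sel1 by simp
  qed
  have Gpos: "0 < G z X" for z X
  proof -
    have cc: "\<bar>c (z(t := g)) X - c (z(t := \<not> g)) X\<bar> \<le> 2"
      using c_shift[where r=r and z=z and X=X, OF t RM rt n i] unfolding c_def by (cases g) (auto simp: abs_minus_commute)
    have key: "0 < pw g * (psi b (c (z(t := g)) X - D g) - psi b (c (z(t := g)) X))
        - pw (\<not> g) * (psi b (c (z(t := \<not> g)) X) - psi b (c (z(t := \<not> g)) X + - D (\<not> g)))"
      by (rule pointwise_key[OF b Dg _ cc pw_nn pw_nn]) (use Dn cond in auto)
    show ?thesis using key unfolding G_def by (cases g) (simp_all add: UNIV_bool algebra_simps)
  qed
  have GI: "integrable ?PI (G z)" for z
    unfolding G_def using int0 int1[of "z(t := u)" for u] by (intro Bochner_Integration.integrable_sum integrable_mult_right Bochner_Integration.integrable_diff) auto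
  have Ipos: "0 < (\<integral>X. G z X \<partial>?PI)" for z
  proof -
    have nn: "0 \<le> (\<integral>X. G z X \<partial>?PI)" using Gpos by (intro integral_nonneg_AE) (auto intro: less_imp_le)
    have "(\<integral>X. G z X \<partial>?PI) \<noteq> 0"
    proof
      assume z: "(\<integral>X. G z X \<partial>?PI) = 0"
      have "AE X in ?PI. 0 \<le> G z X" using Gpos by (auto intro: less_imp_le)
      hence "AE X in ?PI. G z X = 0"
        using integral_nonneg_eq_0_iff_AE[OF GI] z by simp
      hence "AE X in ?PI. False" using Gpos by (auto elim: AE_mp[rotated] simp: less_le)
      thus False by simp
    qed
    thus ?thesis using nn by simp
  qed
  define Z where "Z = PiE ({..<m}-{t}) (\<lambda>_. UNIV :: bool set)"
  have "rnm_expected n m b (R(i := r(t := v))) p i - rnm_expected n m b (R(i := r)) p i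
      = (\<Sum>y\<in>outcomes m. outcome_prob m p y * (rnm_select n m b (R(i := r(t := v))) y i - rnm_select n m b (R(i := r)) y i))"
    unfolding rnm_expected_def by (simp add: sum_subtractf algebra_simps)
  also have "\<dots> = (\<Sum>z\<in>Z. wz m t p z * (\<integral>X. G z X \<partial>?PI))"
    unfolding outcomes_split[OF t] Z_def Gint
    by (intro sum.cong refl) (simp add: op_upd[OF t] UNIV_bool pw_def algebra_simps)
  also have "\<dots> > 0"
  proof -
    have "\<exists>z\<in>Z. wz m t p z \<noteq> 0"
    proof (rule ccontr)
      assume "\<not> ?thesis"
      hence "(\<Sum>z\<in>Z. wz m t p z) = 0" by simp
      thus False using wz_sum[of m t p] by (simp add: Z_def)
    qed
    then obtain z0 where z0: "z0 \<in> Z" "wz m t p z0 \<noteq> 0" by blast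
    have fin: "finite Z" unfolding Z_def by (intro finite_PiE) auto
    show ?thesis
      by (rule sum_pos2[OF fin z0(1)]) (use z0 wz_nonneg[OF p] Ipos in \<open>auto intro!: mult_nonneg_nonneg less_imp_le simp: less_le\<close>)
  qed
  finally show ?thesis by simp
qed

lemma real_cond:
  fixes p r b h :: real
  assumes b: "0 < b" and p: "0 \<le> p" "p \<le> 1" and r: "0 \<le> r" and h: "r = p - 2 * h" and hb: "3 / b < h"
  shows "(1 - p) * (h * (2 * r + h)) * exp (h * (2 * r + h) / b)
       < p * (h * (2 - 2 * r - h)) * exp (- (2 + h * (2 - 2 * r - h)) / b)"
proof -
  have h0: "0 < h" using hb b by (smt (verit) divide_pos_pos)
  have h1: "h \<le> 1 / 2" using h p r by linarith
  define A where "A = h * (2 * r + h)"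
  define B where "B = h * (2 - 2 * r - h)"
  define x where "x = (2 + B + A) / b"
  have A0: "0 \<le> A" using h0 r unfolding A_def by simp
  have B0: "0 \<le> B" using h0 h1 h p unfolding B_def by (intro mult_nonneg_nonneg) auto
  have AB: "A + B \<le> 5 * h" using h0 unfolding A_def B_def by (simp add: algebra_simps)
  have key: "p * B - (1 - p) * A = 3 * h^2"
    unfolding A_def B_def h by (simp add: algebra_simps power2_eq_square)
  have pB: "p * B \<le> 2 * h"
  proof -
    have e: "p * (2 - 2 * r - h) = 2 * p * (1 - p) + 3 * (p * h)" by (simp add: h algebra_simps)
    have "0 \<le> (2 * p - 1)^2" by simp
    hence e1: "2 * p * (1 - p) \<le> 1 / 2" by (simp add: power2_eq_square algebra_simps)
    have "p * h \<le> 1 * (1 / 2)" using p h1 h0 by (intro mult_mono) auto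
    hence "p * (2 - 2 * r - h) \<le> 2" unfolding e using e1 by linarith
    hence "h * (p * (2 - 2 * r - h)) \<le> h * 2" using h0 by (intro mult_left_mono) auto
    thus ?thesis unfolding B_def by (simp add: algebra_simps)
  qed
  have x: "x \<le> (2 + 5 * h) / b" unfolding x_def using AB b by (simp add: divide_right_mono)
  have "p * B * x \<le> 2 * h * ((2 + 5 * h) / b)"
  proof (rule mult_mono[OF pB x])
    show "0 \<le> 2 * h" using h0 by simp
    show "0 \<le> x" unfolding x_def using A0 B0 b by simp
  qed
  also have "\<dots> \<le> 2 * h * (9 / 2 / b)"
    using h1 h0 b by (intro mult_left_mono divide_right_mono) auto
  also have "\<dots> = 3 * h * (3 / b)" by simp
  also have "\<dots> < 3 * h * h" by (rule mult_strict_left_mono) (use hb h0 in auto)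
  finally have pBx: "p * B * x < 3 * h^2" by (simp add: power2_eq_square)
  have "(1 - p) * A < p * B * (1 - x)" using key pBx by (simp add: algebra_simps)
  also have "\<dots> \<le> p * B * exp (- x)"
    using mult_nonneg_nonneg[OF p(1) B0] exp_ge_add_one_self[of "- x"] by (intro mult_left_mono) auto
  finally have main: "(1 - p) * A < p * B * exp (- x)" .
  have "(1 - p) * A * exp (A / b) < p * B * exp (- x) * exp (A / b)"
    using main by simp
  also have "p * B * exp (- x) * exp (A / b) = p * B * exp (- (2 + B) / b)"
    unfolding x_def mult.assoc exp_add[symmetric] using b by (simp add: field_simps)
  finally show ?thesis unfolding A_def B_def .
qed

lemma undominated_band:
  assumes b: "0 < b" and n: "2 \<le> n" and i: "i < n" and t: "t < m"
    and und: "undominated n m b i p r" and ru: "unit_vec m r" and pu: "unit_vec m p"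
  shows "\<bar>r t - p t\<bar> \<le> 6 / b"
proof (rule ccontr)
  assume "\<not> ?thesis"
  hence far: "r t < p t - 6 / b \<or> p t + 6 / b < r t" by linarith
  have rt: "0 \<le> r t" "r t \<le> 1" "0 \<le> p t" "p t \<le> 1" using ru pu t by (auto simp: unit_vec_def)
  show False
  proof (cases "r t < p t - 6 / b")
    case True
    define h where "h = (p t - r t) / 2"
    define v where "v = r t + h"
    have h3: "3 / b < h" using True unfolding h_def by (simp add: field_simps)
    have h0: "0 < h" using h3 b by (smt (verit) divide_pos_pos)
    have "v = (r t + p t) / 2" unfolding v_def h_def by (simp add: field_simps)
    hence vb: "0 \<le> v \<and> v \<le> 1" using rt by auto
    have hr: "r t = p t - 2 * h" unfolding h_def by (simp add: field_simps)
    have vu: "unit_vec m (r(t := v))" using ru vb unfolding unit_vec_def by auto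
    have "strictly_dominates n m b i p (r(t := v)) r"
      unfolding strictly_dominates_def
    proof (intro allI impI)
      fix R assume RM: "report_matrix n m R"
      have e: "r(t := v) = r(t := v)" ..
      have D1: "quad_score v True - quad_score (r t) True = h * (2 - 2 * r t - h)"
        unfolding quad_score_def v_def by (simp add: power2_eq_square algebra_simps)
      have D0: "quad_score v False - quad_score (r t) False = - (h * (2 * r t + h))"
        unfolding quad_score_def v_def by (simp add: power2_eq_square algebra_simps)
      have hh: "h \<le> 1 / 2" using rt h0 unfolding h_def by (auto simp: field_simps)
      show "rnm_expected n m b (R(i := r(t := v))) p i > rnm_expected n m b (R(i := r)) p i"
      proof (rule dom_step[where r=r and g=True and v=v, OF b n i t RM pu rt(1,2)])
        show "0 < quad_score v True - quad_score (r t) True"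
          unfolding D1 using h0 hh rt unfolding h_def by (intro mult_pos_pos) auto
        show "quad_score v (\<not> True) - quad_score (r t) (\<not> True) \<le> 0"
          using D0 h0 rt by simp
        show "(if \<not> True then p t else 1 - p t) * - (quad_score v (\<not> True) - quad_score (r t) (\<not> True)) *
          exp (- (quad_score v (\<not> True) - quad_score (r t) (\<not> True)) / b)
          < (if True then p t else 1 - p t) * (quad_score v True - quad_score (r t) True) *
          exp (- (2 + (quad_score v True - quad_score (r t) True)) / b)"
          using real_cond[OF b rt(3,4) rt(1) hr h3]
          by (simp only: not_True_eq_False if_True if_False D1 D0 minus_minus)
      qed
    qed
    thus False using und vu unfolding undominated_def by blast
  next
    case False
    hence F: "p t + 6 / b < r t" using far by simp
    define h where "h = (r t - p t) / 2"
    define v where "v = r t - h"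
    have h3: "3 / b < h" using F unfolding h_def by (simp add: field_simps)
    have h0: "0 < h" using h3 b by (smt (verit) divide_pos_pos)
    have "v = (r t + p t) / 2" unfolding v_def h_def by (simp add: field_simps)
    hence vb: "0 \<le> v \<and> v \<le> 1" using rt by auto
    have hr: "1 - r t = (1 - p t) - 2 * h" unfolding h_def by (simp add: field_simps)
    have vu: "unit_vec m (r(t := v))" using ru vb unfolding unit_vec_def by auto
    have "strictly_dominates n m b i p (r(t := v)) r"
      unfolding strictly_dominates_def
    proof (intro allI impI)
      fix R assume RM: "report_matrix n m R"
      have D1: "quad_score v False - quad_score (r t) False = h * (2 - 2 * (1 - r t) - h)"
        unfolding quad_score_def v_def by (simp add: power2_eq_square algebra_simps)
      have D0: "quad_score v True - quad_score (r t) True = - (h * (2 * (1 - r t) + h))"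
        unfolding quad_score_def v_def by (simp add: power2_eq_square algebra_simps)
      have hh: "h \<le> 1 / 2" using rt h0 unfolding h_def by (auto simp: field_simps)
      show "rnm_expected n m b (R(i := r(t := v))) p i > rnm_expected n m b (R(i := r)) p i"
      proof (rule dom_step[where r=r and g=False and v=v, OF b n i t RM pu rt(1,2)])
        show "0 < quad_score v False - quad_score (r t) False"
          unfolding D1 using h0 hh rt unfolding h_def by (intro mult_pos_pos) auto
        show "quad_score v (\<not> False) - quad_score (r t) (\<not> False) \<le> 0"
          using D0 h0 rt by simp
        have pp: "1 - (1 - p t) = p t" by simp
        have rc: "(1 - (1 - p t)) * (h * (2 * (1 - r t) + h)) * exp (h * (2 * (1 - r t) + h) / b)
           < (1 - p t) * (h * (2 - 2 * (1 - r t) - h)) * exp (- (2 + h * (2 - 2 * (1 - r t) - h)) / b)"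
          using rt by (intro real_cond[OF b _ _ _ hr h3]) auto
        show "(if \<not> False then p t else 1 - p t) * - (quad_score v (\<not> False) - quad_score (r t) (\<not> False)) *
          exp (- (quad_score v (\<not> False) - quad_score (r t) (\<not> False)) / b)
          < (if False then p t else 1 - p t) * (quad_score v False - quad_score (r t) False) *
          exp (- (2 + (quad_score v False - quad_score (r t) False)) / b)"
          using rc by (simp only: not_False_eq_True if_True if_False D1 D0 minus_minus pp)
      qed
    qed
    thus False using und vu unfolding undominated_def by blast
  qed
qed

lemma two_point_aux:
  fixes th a c l :: real
  assumes th: "0 \<le> th" "th \<le> 1" and ac: "a \<le> c" "c - a \<le> 1" and l: "0 \<le> l"
  defines "mu \<equiv> th * c + (1 - th) * a"
  shows "th * exp (l * (c - mu)) + (1 - th) * exp (l * (a - mu)) \<le> exp (l^2 / 8)"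
proof -
  define h where "h = l * (c - a)"
  have h0: "0 \<le> h" using l ac unfolding h_def by simp
  have hl: "h^2 \<le> l^2"
  proof -
    have "h \<le> l" using l ac unfolding h_def by (simp add: mult_left_le)
    thus ?thesis using h0 by (simp add: power_mono)
  qed
  have pos: "0 < 1 + th * (exp h - 1)" using th h0
    by (smt (verit) exp_ge_zero mult_nonneg_nonneg one_le_exp_iff)
  have e1: "l * (c - mu) = (1 - th) * h" unfolding mu_def h_def by (simp add: algebra_simps)
  have e2: "l * (a - mu) = - th * h" unfolding mu_def h_def by (simp add: algebra_simps)
  have "th * exp (l * (c - mu)) + (1 - th) * exp (l * (a - mu))
      = exp (- h * th) * (1 + th * (exp h - 1))"
    unfolding e1 e2 by (simp add: algebra_simps exp_add[symmetric] exp_diff)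
  also have "\<dots> = exp (- h * th + ln (1 + th * (exp h - 1)))"
    by (subst exp_add) (use pos in simp)
  also have "\<dots> \<le> exp (h^2 / 8)"
    using Hoeffdings_lemma_aux[OF h0 th(1)] by simp
  also have "\<dots> \<le> exp (l^2 / 8)" using hl by simp
  finally show ?thesis .
qed

lemma two_point:
  fixes th a c l :: real
  assumes th: "0 \<le> th" "th \<le> 1" and ac: "\<bar>c - a\<bar> \<le> 1" and l: "0 \<le> l"
  defines "mu \<equiv> th * c + (1 - th) * a"
  shows "th * exp (l * (c - mu)) + (1 - th) * exp (l * (a - mu)) \<le> exp (l^2 / 8)"
proof (cases "a \<le> c")
  case True
  thus ?thesis using two_point_aux[OF th True _ l] ac unfolding mu_def by simp
next
  case False
  have "(1 - th) * exp (l * (a - ((1 - th) * a + (1 - (1 - th)) * c))) + (1 - (1 - th)) * exp (l * (c - ((1 - th) * a + (1 - (1 - th)) * c))) \<le> exp (l^2 / 8)"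
    using False ac th l by (intro two_point_aux) auto
  thus ?thesis unfolding mu_def by (simp add: algebra_simps)
qed

lemma mgf_prod:
  fixes g :: "nat \<Rightarrow> bool \<Rightarrow> real"
  shows "(\<Sum>y\<in>outcomes m. outcome_prob m th y * exp (\<Sum>t<m. g t (y t)))
       = (\<Prod>t<m. th t * exp (g t True) + (1 - th t) * exp (g t False))"
proof -
  have "(\<Prod>t<m. th t * exp (g t True) + (1 - th t) * exp (g t False))
      = (\<Prod>t<m. \<Sum>u\<in>UNIV. (if u then th t else 1 - th t) * exp (g t u))"
    by (simp add: UNIV_bool algebra_simps)
  also have "\<dots> = (\<Sum>y\<in>outcomes m. \<Prod>t<m. (if y t then th t else 1 - th t) * exp (g t (y t)))"
    unfolding outcomes_def by (subst prod_sum_PiE) auto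
  also have "\<dots> = (\<Sum>y\<in>outcomes m. outcome_prob m th y * exp (\<Sum>t<m. g t (y t)))"
    unfolding outcome_prob_def by (simp add: prod.distrib exp_sum)
  finally show ?thesis by simp
qed

lemma op_nonneg: "unit_vec m th \<Longrightarrow> 0 \<le> outcome_prob m th y"
  unfolding outcome_prob_def unit_vec_def by (intro prod_nonneg) auto

lemma op_sum: "(\<Sum>y\<in>outcomes m. outcome_prob m th y) = 1"
  using mgf_prod[of m th "\<lambda>_ _. 0"] by (simp add: UNIV_bool)

lemma hoeff_upper:
  fixes g :: "nat \<Rightarrow> bool \<Rightarrow> real" and x :: real
  assumes th: "unit_vec m th" and g: "\<And>t. t < m \<Longrightarrow> \<bar>g t True - g t False\<bar> \<le> 1"
    and x: "0 < x" and m: "0 < m"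
  defines "mu \<equiv> (\<Sum>t<m. th t * g t True + (1 - th t) * g t False)"
  shows "(\<Sum>y\<in>{y\<in>outcomes m. x \<le> (\<Sum>t<m. g t (y t)) - mu}. outcome_prob m th y) \<le> exp (- 2 * x^2 / m)"
proof -
  define l where "l = 4 * x / m"
  have l0: "0 \<le> l" using x m unfolding l_def by simp
  define mt where "mt = (\<lambda>t. th t * g t True + (1 - th t) * g t False)"
  have fin: "finite (outcomes m)" unfolding outcomes_def by (intro finite_PiE) auto
  have "(\<Sum>y\<in>{y\<in>outcomes m. x \<le> (\<Sum>t<m. g t (y t)) - mu}. outcome_prob m th y)
      \<le> (\<Sum>y\<in>{y\<in>outcomes m. x \<le> (\<Sum>t<m. g t (y t)) - mu}. outcome_prob m th y * exp (l * ((\<Sum>t<m. g t (y t)) - mu - x)))"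
  proof (intro sum_mono)
    fix y assume "y \<in> {y\<in>outcomes m. x \<le> (\<Sum>t<m. g t (y t)) - mu}"
    hence "0 \<le> l * ((\<Sum>t<m. g t (y t)) - mu - x)" using l0 by simp
    hence "1 \<le> exp (l * ((\<Sum>t<m. g t (y t)) - mu - x))" by simp
    thus "outcome_prob m th y \<le> outcome_prob m th y * exp (l * ((\<Sum>t<m. g t (y t)) - mu - x))"
      using op_nonneg[OF th, of y] by (simp add: mult_le_cancel_left1)
  qed
  also have "\<dots> \<le> (\<Sum>y\<in>outcomes m. outcome_prob m th y * exp (l * ((\<Sum>t<m. g t (y t)) - mu - x)))"
    using fin op_nonneg[OF th] by (intro sum_mono2) auto
  also have "\<dots> = exp (- l * x) * (\<Sum>y\<in>outcomes m. outcome_prob m th y * exp (\<Sum>t<m. l * (g t (y t) - mt t)))"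
    unfolding sum_distrib_left
  proof (intro sum.cong refl)
    fix y
    have mu_mt: "mu = (\<Sum>t<m. mt t)" by (simp add: mu_def mt_def)
    have e: "(\<Sum>t<m. l * (g t (y t) - mt t)) = l * ((\<Sum>t<m. g t (y t)) - mu)"
      unfolding mu_mt by (simp add: sum_subtractf sum_distrib_left right_diff_distrib)
    have "l * ((\<Sum>t<m. g t (y t)) - mu - x) = - l * x + l * ((\<Sum>t<m. g t (y t)) - mu)"
      by (simp add: algebra_simps)
    thus "outcome_prob m th y * exp (l * ((\<Sum>t<m. g t (y t)) - mu - x)) =
         exp (- l * x) * (outcome_prob m th y * exp (\<Sum>t<m. l * (g t (y t) - mt t)))"
      unfolding e by (simp add: exp_add[symmetric])
  qed
  also have "\<dots> = exp (- l * x) * (\<Prod>t<m. th t * exp (l * (g t True - mt t)) + (1 - th t) * exp (l * (g t False - mt t)))"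
    by (subst mgf_prod) simp
  also have "\<dots> \<le> exp (- l * x) * (\<Prod>t<m. exp (l^2 / 8))"
  proof (intro mult_left_mono prod_mono conjI)
    fix t assume t: "t \<in> {..<m}"
    have tt: "0 \<le> th t" "th t \<le> 1" using th t by (auto simp: unit_vec_def)
    show "0 \<le> th t * exp (l * (g t True - mt t)) + (1 - th t) * exp (l * (g t False - mt t))"
      using tt by simp
    show "th t * exp (l * (g t True - mt t)) + (1 - th t) * exp (l * (g t False - mt t)) \<le> exp (l^2 / 8)"
      unfolding mt_def using two_point[OF tt _ l0, of "g t True" "g t False"] g t by simp
  qed simp
  also have "\<dots> = exp (- l * x + m * (l^2 / 8))"
    by (simp add: exp_of_nat_mult[symmetric] prod_constant exp_add[symmetric])
  also have "- l * x + m * (l^2 / 8) = - 2 * x^2 / m"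
    unfolding l_def using m by (simp add: field_simps power2_eq_square)
  finally show ?thesis .
qed

lemma noise_part:
  fixes q :: "nat \<Rightarrow> real" and Opt :: "nat set"
  assumes b: "0 < b" and Opt: "Opt \<subseteq> {..<n}" and ist: "ist \<in> Opt" and D: "0 \<le> D"
    and gap: "\<And>j. j < n \<Longrightarrow> j \<notin> Opt \<Longrightarrow> D \<le> q ist - q j"
  shows "1 - real n * exp (- D / (2 * b))
    \<le> (\<Sum>i\<in>Opt. measure (noise_measure n b) {w \<in> space (noise_measure n b). \<forall>j<n. j \<noteq> i \<longrightarrow> q j + w j < q i + w i})"
proof -
  let ?N = "noise_measure n b"
  interpret N: prob_space ?N by (rule noise_prob[OF b])
  define Win where "Win = (\<lambda>i. {w \<in> space ?N. \<forall>j<n. j \<noteq> i \<longrightarrow> q j + w j < q i + w i})"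
  define e where "e = exp (- D / (2 * b))"
  define J where "J = {j. j < n \<and> j \<notin> Opt}"
  define B where "B = (\<lambda>j. {w \<in> space ?N. D / 2 \<le> w j} \<union> {w \<in> space ?N. w ist \<le> - (D / 2)})"
  define P where "P = {(k, l). k < n \<and> l < n \<and> k \<noteq> l}"
  define Tie where "Tie = (\<lambda>(k, l). {w \<in> space ?N. w k + (q k - q l) = w l})"
  have istn: "ist < n" using Opt ist by auto
  have finO: "finite Opt" using Opt finite_subset by blast
  have finJ: "finite J" unfolding J_def by auto
  have finP: "finite P" unfolding P_def by (rule finite_subset[of _ "{..<n} \<times> {..<n}"]) auto
  have Wsets: "Win i \<in> N.events" if "i \<in> Opt" for i
    unfolding Win_def by (rule noise_set_sel) (use that Opt in auto)
  have Bsets: "B j \<in> N.events" if "j \<in> J" for j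
    unfolding B_def by (rule sets.Un[OF noise_set_upper noise_set_lower]) (use that istn in \<open>auto simp: J_def\<close>)
  have Tsets: "Tie kl \<in> N.events" if "kl \<in> P" for kl
  proof -
    obtain k l where [simp]: "kl = (k, l)" by (cases kl)
    have "k < n" "l < n" using that by (auto simp: P_def)
    thus ?thesis unfolding Tie_def by (simp add: noise_set_tie)
  qed
  have disj: "disjoint_family_on Win Opt"
    unfolding disjoint_family_on_def Win_def
  proof (intro ballI impI)
    fix i k assume "i \<in> Opt" "k \<in> Opt" "i \<noteq> k"
    hence "i < n" "k < n" using Opt by auto
    show "{w \<in> space ?N. \<forall>j<n. j \<noteq> i \<longrightarrow> q j + w j < q i + w i} \<inter>
          {w \<in> space ?N. \<forall>j<n. j \<noteq> k \<longrightarrow> q j + w j < q k + w k} = {}"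
    proof (rule equals0I)
      fix w assume w: "w \<in> {w \<in> space ?N. \<forall>j<n. j \<noteq> i \<longrightarrow> q j + w j < q i + w i} \<inter>
          {w \<in> space ?N. \<forall>j<n. j \<noteq> k \<longrightarrow> q j + w j < q k + w k}"
      have "q k + w k < q i + w i" using w \<open>k < n\<close> \<open>i \<noteq> k\<close> by auto
      moreover have "q i + w i < q k + w k" using w \<open>i < n\<close> \<open>i \<noteq> k\<close> by auto
      ultimately show False by simp
    qed
  qed
  have sumW: "(\<Sum>i\<in>Opt. measure ?N (Win i)) = measure ?N (\<Union>i\<in>Opt. Win i)"
    by (rule N.finite_measure_finite_Union[symmetric]) (use finO Wsets disj in auto)
  have Bm: "measure ?N (B j) \<le> e" if "j \<in> J" for j
  proof -
    have jn: "j < n" using that by (auto simp: J_def)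
    have "measure ?N (B j) \<le> measure ?N {w \<in> space ?N. D / 2 \<le> w j} + measure ?N {w \<in> space ?N. w ist \<le> - (D / 2)}"
      unfolding B_def by (rule measure_Un_le[OF noise_set_upper[OF jn] noise_set_lower[OF istn]])
    also have "\<dots> = e" unfolding e_def
      using noise_upper_tail[OF b jn, of "D/2"] noise_lower_tail[OF b istn, of "D/2"] D by simp
    finally show ?thesis .
  qed
  have UB: "measure ?N (\<Union>j\<in>J. B j) \<le> real n * e"
  proof -
    have "measure ?N (\<Union>j\<in>J. B j) \<le> (\<Sum>j\<in>J. measure ?N (B j))"
      by (rule N.finite_measure_subadditive_finite) (use finJ Bsets in auto)
    also have "\<dots> \<le> (\<Sum>j\<in>J. e)" using Bm by (rule sum_mono)
    also have "\<dots> = real (card J) * e" by simp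
    also have "\<dots> \<le> real n * e"
    proof (rule mult_right_mono)
      have "card J \<le> card {..<n}" unfolding J_def by (rule card_mono) auto
      thus "real (card J) \<le> real n" by simp
    qed (simp add: e_def)
    finally show ?thesis .
  qed
  have UT: "measure ?N (\<Union>kl\<in>P. Tie kl) \<le> 0"
  proof -
    have "measure ?N (\<Union>kl\<in>P. Tie kl) \<le> (\<Sum>kl\<in>P. measure ?N (Tie kl))"
      by (rule N.finite_measure_subadditive_finite) (use finP Tsets in auto)
    also have "\<dots> = 0"
    proof (intro sum.neutral ballI)
      fix kl assume "kl \<in> P"
      then obtain k l where [simp]: "kl = (k, l)" and kl: "k < n" "l < n" "k \<noteq> l" by (auto simp: P_def)
      show "measure ?N (Tie kl) = 0" unfolding Tie_def using noise_tie[OF b kl] by simp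
    qed
    finally show ?thesis .
  qed
  have cover: "space ?N \<subseteq> (\<Union>i\<in>Opt. Win i) \<union> (\<Union>j\<in>J. B j) \<union> (\<Union>kl\<in>P. Tie kl)"
  proof
    fix w assume w: "w \<in> space ?N"
    show "w \<in> (\<Union>i\<in>Opt. Win i) \<union> (\<Union>j\<in>J. B j) \<union> (\<Union>kl\<in>P. Tie kl)"
    proof (rule ccontr)
      assume nw: "\<not> ?thesis"
      define V where "V = (\<lambda>k. q k + w k)"
      have ne: "{..<n} \<noteq> {}" using istn by auto
      have "Max (V ` {..<n}) \<in> V ` {..<n}" by (rule Max_in) (use ne in auto)
      then obtain k where k: "k < n" "V k = Max (V ` {..<n})" by auto
      have Vle: "V j \<le> V k" if "j < n" for j using k that by auto
      have notie: "V j \<noteq> V k" if "j < n" "j \<noteq> k" for j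
      proof
        assume "V j = V k"
        hence "w \<in> Tie (j, k)" using w unfolding Tie_def V_def by (auto simp: algebra_simps)
        moreover have "(j, k) \<in> P" using that k unfolding P_def by auto
        ultimately show False using nw by blast
      qed
      have "w \<in> Win k" unfolding Win_def using w Vle notie by (auto simp: V_def less_le)
      hence kO: "k \<notin> Opt" using nw by blast
      hence "k \<in> J" using k by (auto simp: J_def)
      hence "w \<notin> B k" using nw by blast
      hence "w k < D / 2" "- (D / 2) < w ist" using w unfolding B_def by auto
      hence "V k < V ist" using gap[OF k(1) kO] unfolding V_def by linarith
      thus False using Vle[OF istn] by simp
    qed
  qed
  have WU: "(\<Union>i\<in>Opt. Win i) \<in> N.events" by (rule sets.finite_UN) (use finO Wsets in auto)
  have BU: "(\<Union>j\<in>J. B j) \<in> N.events" by (rule sets.finite_UN) (use finJ Bsets in auto)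
  have TU: "(\<Union>kl\<in>P. Tie kl) \<in> N.events" by (rule sets.finite_UN) (use finP Tsets in auto)
  have "1 = measure ?N (space ?N)" by (simp add: N.prob_space)
  also have "\<dots> \<le> measure ?N ((\<Union>i\<in>Opt. Win i) \<union> (\<Union>j\<in>J. B j) \<union> (\<Union>kl\<in>P. Tie kl))"
    by (rule N.finite_measure_mono[OF cover sets.Un[OF sets.Un[OF WU BU] TU]])
  also have "\<dots> \<le> measure ?N ((\<Union>i\<in>Opt. Win i) \<union> (\<Union>j\<in>J. B j)) + measure ?N (\<Union>kl\<in>P. Tie kl)"
    by (rule measure_Un_le[OF sets.Un[OF WU BU] TU])
  also have "\<dots> \<le> measure ?N (\<Union>i\<in>Opt. Win i) + measure ?N (\<Union>j\<in>J. B j) + measure ?N (\<Union>kl\<in>P. Tie kl)"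
    using measure_Un_le[OF WU BU] by linarith
  finally have "1 - real n * e \<le> (\<Sum>i\<in>Opt. measure ?N (Win i))" using UB UT sumW by linarith
  thus ?thesis by (simp add: Win_def e_def)
qed

lemma exp_score: "th * quad_score r True + (1 - th) * quad_score r False = 1 - th * (1 - th) - (r - th)^2"
  unfolding quad_score_def by (simp add: power2_eq_square algebra_simps)

lemma sq_diff_bound:
  fixes r p th k :: real
  assumes "\<bar>r - p\<bar> \<le> k" "0 \<le> r" "r \<le> 1" "0 \<le> p" "p \<le> 1" "0 \<le> th" "th \<le> 1"
  shows "\<bar>(r - th)^2 - (p - th)^2\<bar> \<le> 2 * k"
proof -
  have e: "(r - th)^2 - (p - th)^2 = (r - p) * (r + p - 2 * th)" by (simp add: power2_eq_square algebra_simps)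
  have "\<bar>r + p - 2 * th\<bar> \<le> 2" using assms by auto
  hence "\<bar>r - p\<bar> * \<bar>r + p - 2 * th\<bar> \<le> k * 2" using assms(1) by (intro mult_mono) auto
  thus ?thesis unfolding e abs_mult by simp
qed

lemma total_score_sum: "total_score m r y = (\<Sum>t<m. quad_score (r t) (y t))"
  by (simp add: total_score_def)

theorem mainTheorem17:
  fixes n m :: nat and \<epsilon> \<delta> \<gamma> b :: real
    and P R :: "nat \<Rightarrow> nat \<Rightarrow> real" and \<theta> :: "nat \<Rightarrow> real"
  assumes "0 < \<epsilon>" "\<epsilon> \<le> 1" "0 < \<delta>" "\<delta> < 1"
    and "0 < \<gamma>" "\<gamma> \<le> \<epsilon> / 14" "b = 4 / \<gamma>"
    and "n \<ge> 1"
    and "\<forall>i<n. unit_vec m (P i)" "unit_vec m \<theta>"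
    and "real m \<ge> 28 * ln (2 * real n / \<delta>) / (\<epsilon> * \<gamma>)"
    and "report_matrix n m R"
    and "\<forall>i<n. undominated n m b i (P i) (R i)"
  shows "success_prob n m b \<epsilon> P R \<theta> \<ge> 1 - \<delta>"
proof -
  note eps = assms(1,2) and del = assms(3,4) and gam = assms(5,6) and bdef = assms(7)
    and n1 = assms(8) and Pu = assms(9) and thu = assms(10) and mb = assms(11) and RM = assms(12)
    and und = assms(13)
  define L where "L = ln (2 * real n / \<delta>)"
  have L0: "0 < L" unfolding L_def using del n1 by (intro ln_gt_zero) (auto simp: field_simps)
  have b0: "0 < b" using bdef gam by simp
  have mpos: "0 < real m"
  proof -
    have "0 < 28 * L / (\<epsilon> * \<gamma>)" using L0 eps gam by simp
    thus ?thesis using mb unfolding L_def by linarith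
  qed
  have emg: "L \<le> \<epsilon> * \<gamma> * real m / 28"
    using mb eps gam unfolding L_def by (simp add: field_simps)
  have eL: "exp (- L) = \<delta> / (2 * real n)"
    unfolding L_def using del n1 by (simp add: exp_minus exp_ln)
  define acc where "acc = (\<lambda>k. accuracy m (P k) \<theta>)"
  obtain ist where ist: "ist < n" "\<And>k. k < n \<Longrightarrow> acc k \<le> acc ist"
  proof -
    have ne: "{..<n} \<noteq> {}" using n1 by (simp add: lessThan_empty_iff)
    have "Max (acc ` {..<n}) \<in> acc ` {..<n}" by (rule Max_in) (use ne in auto)
    then obtain k where "k < n" "acc k = Max (acc ` {..<n})" by auto
    thus ?thesis using that by (metis Max_ge finite_imageI finite_lessThan image_eqI lessThan_iff)
  qed
  define Opt where "Opt = {i. i < n \<and> eps_optimal n m \<epsilon> P \<theta> i}"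
  have istO: "ist \<in> Opt" unfolding Opt_def eps_optimal_def using ist eps
    by (auto simp: acc_def) (smt (verit))
  have OptS: "Opt \<subseteq> {..<n}" unfolding Opt_def by auto
  define mu where "mu = (\<lambda>k. \<Sum>t<m. \<theta> t * quad_score (R k t) True + (1 - \<theta> t) * quad_score (R k t) False)"
  define x where "x = \<epsilon> * real m / 7"
  define D where "D = 2 * \<epsilon> * real m / 7"
  have x0: "0 < x" using eps mpos unfolding x_def by simp
  have D0: "0 \<le> D" using eps mpos unfolding D_def by simp
  have gap_mu: "4 * \<epsilon> * real m / 7 < mu ist - mu j" if j: "j < n" "j \<notin> Opt" for j
  proof -
    define SP where "SP = (\<lambda>k. \<Sum>t<m. (P k t - \<theta> t)^2)"
    have accSP: "acc k = 1 - (1 / real m) * SP k" for k unfolding acc_def accuracy_def SP_def ..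
    obtain k where k: "k < n" "acc j < acc k - \<epsilon>"
      using j unfolding Opt_def eps_optimal_def acc_def by auto
    have aj: "acc j < acc ist - \<epsilon>" using k ist(2)[OF k(1)] by linarith
    hence "\<epsilon> < (1 / real m) * (SP j - SP ist)" unfolding accSP by (simp add: algebra_simps)
    hence SPgap: "\<epsilon> * real m < SP j - SP ist" using mpos by (simp add: field_simps)
    have jist: "j \<noteq> ist" using j istO by auto
    have n2: "2 \<le> n" using jist j(1) ist(1) by linarith
    have band: "\<bar>R k t - P k t\<bar> \<le> 6 / b" if "k < n" "t < m" for k t
      using undominated_band[OF b0 n2 that(1) that(2)] und Pu RM that
      by (auto simp: report_matrix_def)
    have bnd: "\<bar>(R k t - \<theta> t)^2 - (P k t - \<theta> t)^2\<bar> \<le> 2 * (6 / b)" if "k < n" "t < m" for k t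
    proof (rule sq_diff_bound[OF band[OF that]])
      show "0 \<le> R k t" "R k t \<le> 1" using RM that by (auto simp: report_matrix_def unit_vec_def)
      show "0 \<le> P k t" "P k t \<le> 1" using Pu that by (auto simp: unit_vec_def)
      show "0 \<le> \<theta> t" "\<theta> t \<le> 1" using thu that by (auto simp: unit_vec_def)
    qed
    have mueq: "mu k = (\<Sum>t<m. 1 - \<theta> t * (1 - \<theta> t) - (R k t - \<theta> t)^2)" for k
      unfolding mu_def exp_score ..
    have "mu ist - mu j = (\<Sum>t<m. (R j t - \<theta> t)^2 - (R ist t - \<theta> t)^2)"
      unfolding mueq by (simp add: sum_subtractf[symmetric])
    also have "\<dots> \<ge> (\<Sum>t<m. ((P j t - \<theta> t)^2 - (P ist t - \<theta> t)^2) - 24 / b)"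
    proof (intro sum_mono)
      fix t assume "t \<in> {..<m}"
      hence t: "t < m" by simp
      show "(P j t - \<theta> t)^2 - (P ist t - \<theta> t)^2 - 24 / b \<le> (R j t - \<theta> t)^2 - (R ist t - \<theta> t)^2"
        using bnd[OF j(1) t] bnd[OF ist(1) t] by (simp add: abs_le_iff)
    qed
    also have "(\<Sum>t<m. ((P j t - \<theta> t)^2 - (P ist t - \<theta> t)^2) - 24 / b) = SP j - SP ist - real m * (24 / b)"
      unfolding SP_def by (simp add: sum_subtractf)
    finally have A: "SP j - SP ist - real m * (24 / b) \<le> mu ist - mu j" .
    have "24 / b \<le> 3 * \<epsilon> / 7" using gam unfolding bdef by (simp add: field_simps)
    hence "real m * (24 / b) \<le> real m * (3 * \<epsilon> / 7)" using mpos by (intro mult_left_mono) auto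
    also have "\<dots> = 3 / 7 * (\<epsilon> * real m)" by simp
    finally have B: "real m * (24 / b) \<le> 3 / 7 * (\<epsilon> * real m)" .
    have "4 * \<epsilon> * real m / 7 = 4 / 7 * (\<epsilon> * real m)" by simp
    thus ?thesis using A B SPgap by linarith
  qed
  have noise_ok: "1 - \<delta> / 2 \<le> (\<Sum>i\<in>Opt. rnm_select n m b R y i)"
    if y: "\<And>k. k < n \<Longrightarrow> \<bar>total_score m (R k) y - mu k\<bar> < x" for y
  proof -
    define q where "q = (\<lambda>k. total_score m (R k) y)"
    have gq: "D \<le> q ist - q j" if j: "j < n" "j \<notin> Opt" for j
    proof -
      have "4 * \<epsilon> * real m / 7 < mu ist - mu j" by (rule gap_mu[OF j])
      moreover have "\<bar>q ist - mu ist\<bar> < x" "\<bar>q j - mu j\<bar> < x" using y ist(1) j(1) by (auto simp: q_def)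
      ultimately show ?thesis unfolding D_def x_def by linarith
    qed
    have "1 - real n * exp (- D / (2 * b))
      \<le> (\<Sum>i\<in>Opt. measure (noise_measure n b) {w \<in> space (noise_measure n b). \<forall>j<n. j \<noteq> i \<longrightarrow> q j + w j < q i + w i})"
      by (rule noise_part[where q=q, OF b0 OptS istO D0 gq])
    also have "\<dots> = (\<Sum>i\<in>Opt. rnm_select n m b R y i)" unfolding rnm_select_def q_def ..
    finally have A: "1 - real n * exp (- D / (2 * b)) \<le> (\<Sum>i\<in>Opt. rnm_select n m b R y i)" .
    have "L \<le> D / (2 * b)" using emg unfolding D_def bdef using gam by (simp add: field_simps)
    hence "exp (- D / (2 * b)) \<le> exp (- L)" by simp
    hence "real n * exp (- D / (2 * b)) \<le> real n * (\<delta> / (2 * real n))" unfolding eL by (intro mult_left_mono) auto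
    also have "\<dots> = \<delta> / 2" using n1 by simp
    finally show ?thesis using A by linarith
  qed
  have S0: "0 \<le> (\<Sum>i\<in>Opt. rnm_select n m b R y i)" for y
    unfolding rnm_select_def by (intro sum_nonneg) auto
  define iu where "iu = (\<lambda>k y. if x \<le> total_score m (R k) y - mu k then 1 else (0::real))"
  define il where "il = (\<lambda>k y. if x \<le> - total_score m (R k) y - - mu k then 1 else (0::real))"
  define E where "E = exp (- 2 * x^2 / real m)"
  have finO: "finite (outcomes m)" unfolding outcomes_def by (intro finite_PiE) auto
  have gb: "\<bar>quad_score (R k t) True - quad_score (R k t) False\<bar> \<le> 1" if "k < n" "t < m" for k t
  proof -
    have "0 \<le> R k t" "R k t \<le> 1" using RM that by (auto simp: report_matrix_def unit_vec_def)
    thus ?thesis unfolding quad_diff by simp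
  qed
  have Hu: "(\<Sum>y\<in>outcomes m. outcome_prob m \<theta> y * iu k y) \<le> E" if k: "k < n" for k
  proof -
    have "(\<Sum>y\<in>outcomes m. outcome_prob m \<theta> y * iu k y)
       = (\<Sum>y\<in>{y\<in>outcomes m. x \<le> (\<Sum>t<m. quad_score (R k t) (y t)) - mu k}. outcome_prob m \<theta> y)"
      unfolding sum.inter_filter[OF finO] iu_def total_score_def by (intro sum.cong) auto
    also have "\<dots> \<le> E" unfolding E_def mu_def
      by (rule hoeff_upper[OF thu _ x0]) (use gb k mpos in auto)
    finally show ?thesis .
  qed
  have Hl: "(\<Sum>y\<in>outcomes m. outcome_prob m \<theta> y * il k y) \<le> E" if k: "k < n" for k
  proof -
    have mueq: "- mu k = (\<Sum>t<m. \<theta> t * (- quad_score (R k t) True) + (1 - \<theta> t) * (- quad_score (R k t) False))"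
      unfolding mu_def by (simp add: sum_negf[symmetric])
    have teq: "- total_score m (R k) y = (\<Sum>t<m. - quad_score (R k t) (y t))" for y
      unfolding total_score_def by (simp add: sum_negf)
    have "(\<Sum>y\<in>outcomes m. outcome_prob m \<theta> y * il k y)
       = (\<Sum>y\<in>{y\<in>outcomes m. x \<le> (\<Sum>t<m. - quad_score (R k t) (y t)) -
            (\<Sum>t<m. \<theta> t * (- quad_score (R k t) True) + (1 - \<theta> t) * (- quad_score (R k t) False))}. outcome_prob m \<theta> y)"
      unfolding sum.inter_filter[OF finO] il_def teq mueq by (intro sum.cong) auto
    also have "\<dots> \<le> E" unfolding E_def
      by (rule hoeff_upper[OF thu _ x0]) (use gb k mpos in \<open>auto simp: abs_minus_commute\<close>)
    finally show ?thesis .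
  qed
  have pointwise: "(1 - \<delta> / 2) * (1 - (\<Sum>k<n. iu k y + il k y)) \<le> (\<Sum>i\<in>Opt. rnm_select n m b R y i)" for y
  proof (cases "\<forall>k<n. iu k y = 0 \<and> il k y = 0")
    case True
    have "\<bar>total_score m (R k) y - mu k\<bar> < x" if "k < n" for k
    proof -
      have "iu k y = 0" "il k y = 0" using True that by auto
      hence "\<not> x \<le> total_score m (R k) y - mu k" "\<not> x \<le> - total_score m (R k) y - - mu k"
        unfolding iu_def il_def by (auto split: if_splits)
      thus ?thesis unfolding abs_less_iff by linarith
    qed
    hence "1 - \<delta> / 2 \<le> (\<Sum>i\<in>Opt. rnm_select n m b R y i)" by (rule noise_ok)
    moreover have "(\<Sum>k<n. iu k y + il k y) = 0" using True by simp
    ultimately show ?thesis by simp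
  next
    case False
    then obtain k where k: "k < n" "iu k y \<noteq> 0 \<or> il k y \<noteq> 0" by auto
    have nn: "0 \<le> iu k' y + il k' y" for k' unfolding iu_def il_def by simp
    have "1 \<le> iu k y + il k y" using k(2) unfolding iu_def il_def by (auto split: if_splits)
    also have "\<dots> \<le> (\<Sum>k<n. iu k y + il k y)"
      using k(1) nn by (intro member_le_sum) auto
    finally have "(1 - \<delta> / 2) * (1 - (\<Sum>k<n. iu k y + il k y)) \<le> 0"
      using del by (intro mult_nonneg_nonpos) auto
    thus ?thesis using S0[of y] by linarith
  qed
  have num: "2 * real n * E \<le> \<delta> / 2"
  proof -
    have "L \<le> \<epsilon> * (\<epsilon> / 14) * real m / 28"
      using emg gam eps mpos by (smt (verit, best) divide_right_mono mult_left_mono mult_right_mono mult_nonneg_nonneg)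
    hence "L * 392 \<le> \<epsilon> * (\<epsilon> * real m)" by (simp add: field_simps)
    hence "L * 49 \<le> \<epsilon> * (\<epsilon> * real m)" using L0 by linarith
    hence "2 * L \<le> 2 * x^2 / real m"
      unfolding x_def using mpos eps by (simp add: power2_eq_square field_simps)
    hence "E \<le> exp (- L) * exp (- L)"
      unfolding E_def by (simp add: exp_add[symmetric])
    also have "\<dots> = (\<delta> / (2 * real n))^2" using eL by (simp add: power2_eq_square)
    finally have "2 * real n * E \<le> 2 * real n * (\<delta> / (2 * real n))^2" using n1 by simp
    also have "\<dots> = \<delta> * \<delta> / (2 * real n)" using n1 by (simp add: power2_eq_square field_simps)
    also have "\<dots> \<le> \<delta> / 2"
    proof -
      have "\<delta> * \<delta> \<le> \<delta> * real n" using del n1 by (intro mult_left_mono) auto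
      thus ?thesis using n1 del by (simp add: field_simps)
    qed
    finally show ?thesis .
  qed
  have "success_prob n m b \<epsilon> P R \<theta> = (\<Sum>y\<in>outcomes m. outcome_prob m \<theta> y * (\<Sum>i\<in>Opt. rnm_select n m b R y i))"
    unfolding success_prob_def Opt_def ..
  also have "\<dots> \<ge> (\<Sum>y\<in>outcomes m. outcome_prob m \<theta> y * ((1 - \<delta> / 2) * (1 - (\<Sum>k<n. iu k y + il k y))))"
    by (intro sum_mono mult_left_mono pointwise op_nonneg[OF thu])
  finally have A: "(\<Sum>y\<in>outcomes m. outcome_prob m \<theta> y * ((1 - \<delta> / 2) * (1 - (\<Sum>k<n. iu k y + il k y)))) \<le> success_prob n m b \<epsilon> P R \<theta>" .
  have "(\<Sum>y\<in>outcomes m. outcome_prob m \<theta> y * ((1 - \<delta> / 2) * (1 - (\<Sum>k<n. iu k y + il k y))))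
     = (1 - \<delta> / 2) * (1 - (\<Sum>k<n. (\<Sum>y\<in>outcomes m. outcome_prob m \<theta> y * iu k y) + (\<Sum>y\<in>outcomes m. outcome_prob m \<theta> y * il k y)))"
  proof -
    define c where "c = 1 - \<delta> / 2"
    define F where "F = (\<lambda>y. \<Sum>k<n. iu k y + il k y)"
    have t1: "(\<Sum>y\<in>outcomes m. outcome_prob m \<theta> y * (c * (1 - F y)))
       = c * (\<Sum>y\<in>outcomes m. outcome_prob m \<theta> y) - c * (\<Sum>y\<in>outcomes m. outcome_prob m \<theta> y * F y)"
      by (simp add: sum_subtractf sum_distrib_left right_diff_distrib mult.left_commute mult.commute)
    have "(\<Sum>y\<in>outcomes m. outcome_prob m \<theta> y * F y) = (\<Sum>y\<in>outcomes m. \<Sum>k<n. outcome_prob m \<theta> y * iu k y + outcome_prob m \<theta> y * il k y)"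
      unfolding F_def by (simp add: sum_distrib_left distrib_left)
    also have "\<dots> = (\<Sum>k<n. \<Sum>y\<in>outcomes m. outcome_prob m \<theta> y * iu k y + outcome_prob m \<theta> y * il k y)"
      by (rule sum.swap)
    also have "\<dots> = (\<Sum>k<n. (\<Sum>y\<in>outcomes m. outcome_prob m \<theta> y * iu k y) + (\<Sum>y\<in>outcomes m. outcome_prob m \<theta> y * il k y))"
      by (simp add: sum.distrib)
    finally have t2: "(\<Sum>y\<in>outcomes m. outcome_prob m \<theta> y * F y) = \<dots>" .
    show ?thesis using t1 t2 op_sum unfolding F_def c_def by (simp add: right_diff_distrib)
  qed
  also have "\<dots> \<ge> (1 - \<delta> / 2) * (1 - (\<Sum>k<n. E + E))"
    using del Hu Hl by (intro mult_left_mono diff_left_mono sum_mono add_mono) auto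
  finally have B: "(1 - \<delta> / 2) * (1 - 2 * real n * E) \<le> success_prob n m b \<epsilon> P R \<theta>"
    using A by (simp add: mult.assoc mult.left_commute)
  have "1 - \<delta> \<le> (1 - \<delta> / 2) * (1 - \<delta> / 2)" by (simp add: algebra_simps power2_eq_square)
  also have "\<dots> \<le> (1 - \<delta> / 2) * (1 - 2 * real n * E)"
    using num del by (intro mult_left_mono) auto
  finally show ?thesis using B by linarith
qed

end
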